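(* Let $c,d\in\mathbb{R}^n$ be distinct nonzero vectors with $c^Td\le0$. Set $e=c-d$, $\beta=c^Te$, and $$d_+=d-(c^Td)\Big(\frac{e}{\beta}-\frac{c}{\|c\|\sqrt{\beta}}\Big),\qquad c_+=c-(c^Tc)\Big(\frac{e}{\beta}-\frac{c}{\|c\|\sqrt{\beta}}\Big).$$ Then $\gamma[c_+,d_+]\ge\gamma[c,d]+(\gamma[c,d])^3$.
   Context: For distinct vectors $c,d\in\mathbb{R}^n$, $\gamma[c,d]=\frac{\sqrt{\|c\|^2\|d\|^2-(c^Td)^2}}{\|c-d\|^2}$ (symmetric in $c,d$). Note $\beta=\|c\|^2-c^Td>0$ under the hypotheses. *)

theory Defs
  imports "HOL-Analysis.Analysis"
begin

definition gamma :: "real^'n \<Rightarrow> real^'n \<Rightarrow> real" where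
  "gamma c d = sqrt ((norm c)^2 * (norm d)^2 - (c \<bullet> d)^2) / (norm (c - d))^2"

end

theory Submission
  imports Defs
begin

lemma gram_comb: fixes c d :: "real^'n"
 shows "(norm (x*\<^sub>R d + y*\<^sub>R c))^2 * (norm (x'*\<^sub>R d + y'*\<^sub>R c))^2 - ((x*\<^sub>R d + y*\<^sub>R c) \<bullet> (x'*\<^sub>R d + y'*\<^sub>R c))^2 = (x*y' - y*x')^2 * ((norm c)^2*(norm d)^2 - (c\<bullet>d)^2)"
proof -
  have e: "d \<bullet> c = c \<bullet> d" by (rule inner_commute)
  show ?thesis unfolding power2_norm_eq_inner
    by (simp add: inner_add_left inner_add_right e power2_eq_square) (simp add: algebra_simps)
qed

lemma scal: fixes t y :: real assumes "t \<ge> 1" "y \<ge> 1" shows "t^5*y^3 \<ge> t^4*y^2 + (y-1)"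
proof -
  have h4: "t^4 \<ge> 1" using assms by simp
  have a: "t^5*y^3 \<ge> t^4*y^3" using assms by (intro mult_right_mono) (auto simp: power_increasing[of 4 5 t, simplified])
  have b: "t^4*y^3 = t^4*y^2 + t^4*y^2*(y-1)" by (simp add: algebra_simps power2_eq_square power3_eq_cube)
  have c: "y-1 \<le> t^4*y^2*(y-1)" using mult_mono[OF mult_mono[OF h4, of 1 "y^2"], of "y-1" "y-1"] assms
    by (simp add: one_le_power)
  show ?thesis using a b c by linarith
qed

lemma scal2: fixes a b E :: real assumes a: "a > 0" and ba: "b \<ge> a" and E: "a*E \<ge> b^2"
  shows "sqrt (a/b) / b \<ge> 1/E + (a*E - b^2)/E^3"
proof -
  define t where "t = sqrt (b/a)"
  have t1: "t \<ge> 1" using a ba by (simp add: t_def)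
  have tp: "t > 0" using t1 by simp
  have bt: "b = a*t^2" using a ba by (simp add: t_def)
  have sq: "sqrt (a/b) = 1/t" using a ba by (simp add: t_def real_sqrt_divide)
  define y where "y = E/(a*t^4)"
  have Ey: "E = a*t^4*y" using a tp by (simp add: y_def)
  have y1: "y \<ge> 1"
  proof -
    have "a*(a*t^4*y) \<ge> (a*t^2)^2" using E Ey bt by simp
    hence "a*a*t^4*y \<ge> a*a*t^4*1" by (simp add: power2_eq_square power4_eq_xxxx algebra_simps)
    moreover have "a*a*t^4 > 0" using a tp by simp
    ultimately show ?thesis using mult_le_cancel_left_pos[of "a*a*t^4" 1 y] by blast
  qed
  have yp: "y > 0" using y1 by simp
  have key: "t^5*y^3 \<ge> t^4*y^2 + (y-1)" using scal t1 y1 by blast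
  have lhs: "sqrt (a/b) / b = 1/(a*t^3)" using sq bt by (simp add: power2_eq_square power3_eq_cube)
  have rhs: "1/E + (a*E - b^2)/E^3 = (t^4*y^2 + (y-1)) / (a*t^8*y^3)"
  proof -
    define T where "T = t^4"
    have Tp: "T > 0" using tp by (simp add: T_def)
    have t8: "t^8 = T^2" by (simp add: T_def flip: power_mult)
    have n: "a*E - b^2 = a^2*T*(y-1)" by (simp add: Ey bt T_def algebra_simps power2_eq_square power4_eq_xxxx flip: power_add power_mult_distrib)
    have E3: "E^3 = a^3*T^3*y^3" by (simp add: Ey T_def power_mult_distrib)
    have "1/E + (a*E - b^2)/E^3 = 1/(a*T*y) + a^2*T*(y-1)/(a^3*T^3*y^3)" unfolding n E3 by (simp add: Ey T_def)
    also have "\<dots> = (T*y^2 + (y-1)) / (a*T^2*y^3)" using a Tp yp by (simp add: field_simps power2_eq_square power3_eq_cube)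
    finally show ?thesis by (simp only: t8 T_def)
  qed
  have "(t^4*y^2 + (y-1)) / (a*t^8*y^3) \<le> (t^5*y^3) / (a*t^8*y^3)"
    using key a tp yp by (intro divide_right_mono) auto
  also have "\<dots> = (t^5*y^3) / ((a*t^3)*(t^5*y^3))" by (simp add: algebra_simps flip: power_add)
  also have "\<dots> = 1/(a*t^3)" using a tp yp by simp
  finally show ?thesis using lhs rhs by simp
qed


theorem mainTheorem9:
  fixes c d :: "real^'n"
  assumes "c \<noteq> d" and "c \<noteq> 0" and "d \<noteq> 0" and "c \<bullet> d \<le> 0"
  shows "let e = c - d; \<beta> = c \<bullet> e;
             w = (1 / \<beta>) *\<^sub>R e - (1 / (norm c * sqrt \<beta>)) *\<^sub>R c;
             dp = d - (c \<bullet> d) *\<^sub>R w;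
             cp = c - (c \<bullet> c) *\<^sub>R w
         in gamma cp dp \<ge> gamma c d + (gamma c d)^3"
proof -
  define a where "a = c \<bullet> c"
  define p where "p = c \<bullet> d"
  define q where "q = d \<bullet> d"
  define \<beta> where "\<beta> = c \<bullet> (c - d)"
  define r where "r = norm c"
  define s where "s = sqrt \<beta>"
  define w where "w = (1 / \<beta>) *\<^sub>R (c - d) - (1 / (r * s)) *\<^sub>R c"
  define dp where "dp = d - p *\<^sub>R w"
  define cp where "cp = c - a *\<^sub>R w"
  have ap: "a > 0" using assms(2) by (simp add: a_def)
  have p0: "p \<le> 0" using assms(4) by (simp add: p_def)
  have \<beta>ap: "\<beta> = a - p" by (simp add: \<beta>_def a_def p_def inner_diff_right)
  have \<beta>a: "\<beta> \<ge> a" using \<beta>ap p0 by simp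
  have \<beta>p: "\<beta> > 0" using \<beta>a ap by simp
  have r2: "r^2 = a" by (simp add: r_def a_def power2_norm_eq_inner)
  have rp: "r > 0" using assms(2) by (simp add: r_def)
  have s2: "s^2 = \<beta>" using \<beta>p by (simp add: s_def)
  have sp: "s > 0" using \<beta>p by (simp add: s_def)
  define kc where "kc = 1 + p/ \<beta>"
  define mc where "mc = 1 - a/ \<beta> + a/(r * s)"
  define lc where "lc = - p/ \<beta> + p/(r * s)"
  have ka: "kc = a/ \<beta>" using \<beta>p \<beta>ap by (simp add: kc_def field_simps)
  have cpe: "cp = (a/ \<beta>) *\<^sub>R d + mc *\<^sub>R c"
    unfolding cp_def w_def mc_def by (simp add: algebra_simps)
  have dpe: "dp = kc *\<^sub>R d + lc *\<^sub>R c"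
    unfolding dp_def w_def kc_def lc_def by (simp add: algebra_simps)
  have ml: "mc - lc = s/r"
  proof -
    have "mc - lc = 1 - (a-p)/ \<beta> + (a-p)/(r * s)" by (simp add: mc_def lc_def diff_divide_distrib)
    also have "\<dots> = \<beta>/(r * s)" using \<beta>p \<beta>ap by simp
    also have "\<dots> = s/r" using sp rp s2 by (simp add: field_simps power2_eq_square)
    finally show ?thesis .
  qed
  have diff: "cp - dp = (s/r) *\<^sub>R c"
    unfolding cpe dpe ka ml[symmetric] by (simp add: algebra_simps)
  have nd: "(norm (cp - dp))^2 = \<beta>"
    unfolding diff using rp s2 r2 by (simp add: r_def[symmetric] power_mult_distrib power_divide)
  define G where "G = (norm c)^2*(norm d)^2 - (c\<bullet>d)^2"
  have Gq: "G = a*q - p^2" by (simp add: G_def a_def q_def p_def power2_norm_eq_inner)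
  have G0: "G \<ge> 0" using Cauchy_Schwarz_ineq[of c d] by (simp add: Gq a_def q_def p_def)
  have gram: "(norm cp)^2*(norm dp)^2 - (cp \<bullet> dp)^2 = a*G/ \<beta>"
  proof -
    have "(norm cp)^2*(norm dp)^2 - (cp \<bullet> dp)^2 = (kc*lc - mc*kc)^2 * G"
      unfolding cpe dpe ka[symmetric] G_def by (rule gram_comb)
    also have "(kc*lc - mc*kc)^2 = kc^2 * (mc-lc)^2" by (simp add: algebra_simps power2_eq_square)
    also have "\<dots> = a/ \<beta>" unfolding ka ml using s2 r2 \<beta>p ap
      by (simp add: power_divide field_simps power2_eq_square)
    finally show ?thesis by simp
  qed
  define E where "E = (norm (c - d))^2"
  have Eq: "E = a - 2*p + q"
    by (simp add: E_def a_def p_def q_def power2_norm_eq_inner inner_diff_left inner_diff_right inner_commute[of d c])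
  have Ep: "E > 0" using assms(1) by (simp add: E_def)
  have GE: "G = a*E - \<beta>^2" by (simp add: Gq Eq \<beta>ap algebra_simps power2_eq_square)
  have aE: "a*E \<ge> \<beta>^2" using G0 GE by simp
  have g1: "gamma c d = sqrt G / E" by (simp add: gamma_def G_def E_def)
  have g2: "gamma cp dp = sqrt G * (sqrt (a/ \<beta>) / \<beta>)"
    unfolding gamma_def gram nd using \<beta>p ap by (simp add: real_sqrt_mult real_sqrt_divide)
  have "sqrt G * (1/E + (a*E - \<beta>^2)/E^3) \<le> sqrt G * (sqrt (a/ \<beta>) / \<beta>)"
    using scal2[OF ap \<beta>a aE] using G0 by (intro mult_left_mono) auto
  moreover have "sqrt G * (1/E + (a*E - \<beta>^2)/E^3) = gamma c d + (gamma c d)^3"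
  proof -
    have "(sqrt G)^3 = sqrt G * G" using G0 by (simp add: power3_eq_cube)
    thus ?thesis unfolding g1 GE[symmetric] by (simp add: power_divide field_simps)
  qed
  ultimately have "gamma cp dp \<ge> gamma c d + (gamma c d)^3" using g2 by simp
  thus ?thesis
    by (simp add: Let_def cp_def dp_def w_def a_def p_def \<beta>_def r_def s_def)
qed

end
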